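(* Let $C$ be a subadditive monotone normalized cost function. Then for every profile of (monotone, normalized) valuations and every tie-breaking rule among profit-maximizing bundles, the allocation $\overrightarrow{ALG}$ produced by the Sequential Mechanism satisfies $\pi(\overrightarrow{ALG})\le n\cdot\pi(\overrightarrow{OPT})$, where $\overrightarrow{OPT}$ minimizes the social cost.
   Context: Setting. $N=\{1,\dots,n\}$ is a set of players and $M_1,\dots,M_n$ are pairwise disjoint finite sets; $M=\bigcup_i M_i$; allocations $\vec S=(S_1,\dots,S_n)$ with $S_i\subseteq M_i$ are identified with subsets of $M$. A cost function is a monotone $C:2^M\to\mathbb{R}_{\ge0}$ with $C(\emptyset)=0$; subadditive: $C(S)+C(T)\ge C(S\cup T)$. Valuations $v_i:2^{M_i}\to\mathbb{R}_{\ge0}$ are monotone with $v_i(\emptyset)=0$. Sequential Mechanism (with a given tie-breaking rule): start with $ALG_i=\emptyset$ for all $i$; for $i=1,\dots,n$ in order, set $ALG_i$ to some element of $\arg\max_{S\subseteq M_i}v_i(S)-[C(\overrightarrow{ALG}\cup S)-C(\overrightarrow{ALG})]$ (with $\overrightarrow{ALG}$ the current allocation of players $1,\dots,i-1$), and charge $p_i=C(ALG_1,\dots,ALG_i)-C(ALG_1,\dots,ALG_{i-1})$. Social cost: $\pi(\vec S)=C(\vec S)+\sum_i[v_i(M_i)-v_i(S_i)]$. *)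

theory Defs
  imports Complex_Main
begin

definition ground :: "nat \<Rightarrow> (nat \<Rightarrow> 'a set) \<Rightarrow> 'a set" where
  "ground n M = (\<Union>i\<in>{1..n}. M i)"

definition is_allocation :: "nat \<Rightarrow> (nat \<Rightarrow> 'a set) \<Rightarrow> (nat \<Rightarrow> 'a set) \<Rightarrow> bool" where
  "is_allocation n M S \<longleftrightarrow> (\<forall>i\<in>{1..n}. S i \<subseteq> M i)"

definition alloc_set :: "nat \<Rightarrow> (nat \<Rightarrow> 'a set) \<Rightarrow> 'a set" where
  "alloc_set n S = (\<Union>i\<in>{1..n}. S i)"

definition cost_function :: "'a set \<Rightarrow> ('a set \<Rightarrow> real) \<Rightarrow> bool" where
  "cost_function Mg C \<longleftrightarrow> C {} = 0 \<and> (\<forall>S \<subseteq> Mg. C S \<ge> 0)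
     \<and> (\<forall>S T. S \<subseteq> T \<and> T \<subseteq> Mg \<longrightarrow> C S \<le> C T)"

definition subadditive :: "'a set \<Rightarrow> ('a set \<Rightarrow> real) \<Rightarrow> bool" where
  "subadditive Mg C \<longleftrightarrow> (\<forall>S T. S \<subseteq> Mg \<and> T \<subseteq> Mg \<longrightarrow> C (S \<union> T) \<le> C S + C T)"

definition valuation :: "'a set \<Rightarrow> ('a set \<Rightarrow> real) \<Rightarrow> bool" where
  "valuation Mi v \<longleftrightarrow> v {} = 0 \<and> (\<forall>S \<subseteq> Mi. v S \<ge> 0)
     \<and> (\<forall>S T. S \<subseteq> T \<and> T \<subseteq> Mi \<longrightarrow> v S \<le> v T)"

definition social_cost ::
  "nat \<Rightarrow> (nat \<Rightarrow> 'a set) \<Rightarrow> ('a set \<Rightarrow> real) \<Rightarrow> (nat \<Rightarrow> 'a set \<Rightarrow> real) \<Rightarrow> (nat \<Rightarrow> 'a set) \<Rightarrow> real" where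
  "social_cost n M C v S = C (alloc_set n S) + (\<Sum>i\<in>{1..n}. v i (M i) - v i (S i))"

text \<open>An outcome of the Sequential Mechanism under SOME tie-breaking rule:
  each player i (in order 1..n) receives a profit-maximizing bundle given the
  allocation of players 1..i-1. Quantifying over all such ALG covers every
  tie-breaking rule.\<close>
definition sequential_outcome ::
  "nat \<Rightarrow> (nat \<Rightarrow> 'a set) \<Rightarrow> ('a set \<Rightarrow> real) \<Rightarrow> (nat \<Rightarrow> 'a set \<Rightarrow> real) \<Rightarrow> (nat \<Rightarrow> 'a set) \<Rightarrow> bool" where
  "sequential_outcome n M C v ALG \<longleftrightarrow>
     (\<forall>i\<in>{1..n}. ALG i \<subseteq> M i \<and>
        (let P = (\<Union>j\<in>{1..<i}. ALG j) in
          \<forall>S \<subseteq> M i. v i S - (C (P \<union> S) - C P) \<le> v i (ALG i) - (C (P \<union> ALG i) - C P)))"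

end

theory Submission
  imports Defs
begin

theorem lemma7p3:
  fixes n :: nat and M :: "nat \<Rightarrow> 'a set" and C :: "'a set \<Rightarrow> real"
    and v :: "nat \<Rightarrow> 'a set \<Rightarrow> real" and ALG OPT :: "nat \<Rightarrow> 'a set"
  assumes finM: "\<forall>i\<in>{1..n}. finite (M i)"
    and disj: "\<forall>i\<in>{1..n}. \<forall>j\<in>{1..n}. i \<noteq> j \<longrightarrow> M i \<inter> M j = {}"
    and cost: "cost_function (ground n M) C"
    and subadd: "subadditive (ground n M) C"
    and vals: "\<forall>i\<in>{1..n}. valuation (M i) (v i)"
    and alg: "sequential_outcome n M C v ALG"
    and opt_alloc: "is_allocation n M OPT"
    and opt_min: "\<forall>S. is_allocation n M S \<longrightarrow> social_cost n M C v OPT \<le> social_cost n M C v S"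
  shows "social_cost n M C v ALG \<le> real n * social_cost n M C v OPT"
proof -
  define Q where "Q k = (\<Union>j\<in>{1..<k}. ALG j)" for k
  define t where "t i = v i (M i) - v i (ALG i) + (C (Q (Suc i)) - C (Q i))" for i
  have C0: "C {} = 0" and Cmono: "\<And>S T. S \<subseteq> T \<Longrightarrow> T \<subseteq> ground n M \<Longrightarrow> C S \<le> C T"
    using cost unfolding cost_function_def by auto
  have algi: "\<And>i. i \<in> {1..n} \<Longrightarrow> ALG i \<subseteq> M i" using alg unfolding sequential_outcome_def by auto
  have Mg: "\<And>i. i \<in> {1..n} \<Longrightarrow> M i \<subseteq> ground n M" unfolding ground_def by auto
  have Qg: "\<And>i. i \<le> Suc n \<Longrightarrow> Q i \<subseteq> ground n M"
    unfolding Q_def ground_def using algi by fastforce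
  have QS: "\<And>i. i \<ge> 1 \<Longrightarrow> Q (Suc i) = Q i \<union> ALG i"
    unfolding Q_def by (auto simp: less_Suc_eq)
  have optg: "\<And>i. i \<in> {1..n} \<Longrightarrow> OPT i \<subseteq> M i" using opt_alloc unfolding is_allocation_def by auto
  have aso: "alloc_set n OPT \<subseteq> ground n M"
    unfolding alloc_set_def ground_def using optg by fastforce
  have tle: "t i \<le> social_cost n M C v OPT" if i: "i \<in> {1..n}" for i
  proof -
    have a: "v i (OPT i) - (C (Q i \<union> OPT i) - C (Q i)) \<le> v i (ALG i) - (C (Q i \<union> ALG i) - C (Q i))"
      using alg i optg[OF i] unfolding sequential_outcome_def Q_def Let_def by auto
    have b: "C (Q i \<union> OPT i) \<le> C (Q i) + C (OPT i)"
      using subadd Qg[of i] optg[OF i] Mg[OF i] i unfolding subadditive_def by auto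
    have c: "C (OPT i) \<le> C (alloc_set n OPT)"
      using Cmono[OF _ aso] i unfolding alloc_set_def by blast
    have nn: "\<And>j. j \<in> {1..n} \<Longrightarrow> 0 \<le> v j (M j) - v j (OPT j)"
      using vals optg unfolding valuation_def by fastforce
    have d: "v i (M i) - v i (OPT i) \<le> (\<Sum>j\<in>{1..n}. v j (M j) - v j (OPT j))"
      by (rule member_le_sum[OF i]) (use nn in auto)
    have "t i = v i (M i) - v i (ALG i) + (C (Q i \<union> ALG i) - C (Q i))"
      unfolding t_def using QS[of i] i by simp
    thus ?thesis using a b c d unfolding social_cost_def by linarith
  qed
  have "social_cost n M C v ALG = (\<Sum>i\<in>{1..n}. t i)"
  proof -
    have tel: "(\<Sum>i = 1..n. C (Q (Suc i)) - C (Q i)) = C (Q (Suc n)) - C (Q 1)"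
      by (rule sum_Suc_diff) simp
    have "Q 1 = {}" unfolding Q_def by simp
    moreover have "Q (Suc n) = alloc_set n ALG" unfolding Q_def alloc_set_def
      by (auto simp: less_Suc_eq_le)
    ultimately have "C (alloc_set n ALG) = (\<Sum>i = 1..n. C (Q (Suc i)) - C (Q i))"
      using tel C0 by simp
    thus ?thesis unfolding social_cost_def t_def by (simp add: sum.distrib)
  qed
  also have "\<dots> \<le> (\<Sum>i\<in>{1..n}. social_cost n M C v OPT)"
    by (rule sum_mono) (rule tle)
  also have "\<dots> = real n * social_cost n M C v OPT" by simp
  finally show ?thesis .
qed

end
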